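(* Let $q$ be a self-join-free Boolean conjunctive query. Let $C=F_0\to F_1\to\cdots\to F_{k-1}\to F_0$ be an elementary cycle of length $k\ge 2$ in the M-graph of $q$, and identify $C$ with the set $\{F_0,\dots,F_{k-1}\}$. Let $\mathbf{db}$ be a database. Let $\mathbf{o}$ be a minimal (with respect to $\subseteq$) subset of $\mathbf{db}$ satisfying: (1) $\mathbf{o}$ contains every fact $A$ of $\mathbf{db}$ with $\mathrm{atom}(A)\in\{F_0,\dots,F_{k-1}\}$ that has outdegree zero in the $\hookrightarrow_C$-graph; (2) $\mathbf{o}$ contains every fact belonging to some irrelevant $1$-embedding of $C$ in $\mathbf{db}$; (3) $\mathbf{o}$ contains every fact belonging to some $n$-embedding of $C$ in $\mathbf{db}$ with $n\ge 2$; (4) if $\mathbf{o}$ contains some fact of a relevant $1$-embedding of $C$ in $\mathbf{db}$, then $\mathbf{o}$ contains every fact of that $1$-embedding; and (5) if $\mathbf{o}$ contains a fact $A$, then $\mathbf{o}$ includes the block of $A$ in $\mathbf{db}$. Then $\mathbf{o}$ is the maximal garbage set for $C$ in $\mathbf{db}$.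
   Context: Every relation name has a signature $[n,k]$ ($1\le k\le n$; primary-key positions $1,\dots,k$) and a mode in $\{\mathsf{c},\mathsf{i}\}$. For an atom $F$, $\mathrm{key}(F)$ = variables at primary-key positions, $\mathrm{vars}(F)$ = all its variables. Facts are variable-free atoms; key-equal facts share relation name and primary-key values. A database is a finite set of facts with no two distinct key-equal facts of mode $\mathsf{c}$, all of whose relation names occur in $q$; the block of $A$ in $\mathbf{db}$ is the set of facts of $\mathbf{db}$ key-equal to $A$; a repair is a maximal subset without two distinct key-equal facts. A self-join-free Boolean conjunctive query is a finite set of atoms with distinct relation names; $\mathrm{atom}(A)$ is the atom of $q$ with the relation name of fact $A$. $\mathcal{K}(p)=\{\mathrm{key}(F)\to\mathrm{vars}(F)\mid F\in p\}$; $q^{\mathsf{c}}$ = atoms of $q$ of mode $\mathsf{c}$. M-graph of $q$: vertices atoms of $q$, edge $F\to G$ ($F\ne G$) iff $\mathcal{K}(q^{\mathsf{c}})\models\mathrm{vars}(F)\to\mathrm{key}(G)$. $\hookrightarrow$-graph: vertices facts of $\mathbf{db}$, edge $A\hookrightarrow B$ iff there are a valuation $\theta$ of the variables of $q$ and an M-graph edge $F\to G$ with $\theta(q)\subseteq\mathbf{db}$, $A=\theta(F)$, $B$ key-equal to $\theta(G)$. The $\hookrightarrow_C$-graph: vertices the facts $A\in\mathbf{db}$ with $\mathrm{atom}(A)$ in $C$, edge $A\hookrightarrow_C B$ iff $A\hookrightarrow B$ and $C$ has an edge from $\mathrm{atom}(A)$ to $\mathrm{atom}(B)$. An $n$-embedding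 of $C$ in $\mathbf{db}$ is an elementary $\hookrightarrow_C$-cycle of length $nk$ containing no two distinct key-equal facts. A $1$-embedding is relevant if some valuation $\theta$ with $\theta(q)\subseteq\mathbf{db}$ has all facts of the $1$-embedding in $\theta(q)$; otherwise irrelevant. A subset $\mathbf{o}\subseteq\mathbf{db}$ is a garbage set for $q_0\subseteq q$ in $\mathbf{db}$ if (1) for every $A\in\mathbf{o}$, $\mathrm{atom}(A)\in q_0$ and the block of $A$ is included in $\mathbf{o}$; and (2) there is a repair $\mathbf{r}$ of $\mathbf{o}$ such that for every valuation $\theta$ of the variables of $q$, if $\theta(q)\subseteq(\mathbf{db}\setminus\mathbf{o})\cup\mathbf{r}$ then $\theta(q_0)\cap\mathbf{r}=\emptyset$. Garbage sets are closed under union; the maximal garbage set is the largest one. *)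

theory Defs
  imports Main
begin

datatype mode = ModeC | ModeI

record 'r schema =
  arity  :: "'r \<Rightarrow> nat"
  keylen :: "'r \<Rightarrow> nat"
  rmode  :: "'r \<Rightarrow> mode"

datatype ('v, 'c) trm = Var 'v | Cst 'c

datatype ('r, 'v, 'c) atom = Atom (arel: 'r) (aargs: "('v, 'c) trm list")

datatype ('r, 'c) fact = Fact (frel: 'r) (fargs: "'c list")

text \<open>key(F): variables at primary-key positions 1..k (list positions 0..<k).\<close>
definition key_vars :: "'r schema \<Rightarrow> ('r, 'v, 'c) atom \<Rightarrow> 'v set" where
  "key_vars S F = {v. \<exists>i < keylen S (arel F). i < length (aargs F) \<and> aargs F ! i = Var v}"

definition atom_vars :: "('r, 'v, 'c) atom \<Rightarrow> 'v set" where
  "atom_vars F = {v. Var v \<in> set (aargs F)}"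

definition sjf_query :: "'r schema \<Rightarrow> ('r, 'v, 'c) atom set \<Rightarrow> bool" where
  "sjf_query S q \<longleftrightarrow> finite q \<and> inj_on arel q \<and>
     (\<forall>F\<in>q. length (aargs F) = arity S (arel F) \<and>
             1 \<le> keylen S (arel F) \<and> keylen S (arel F) \<le> arity S (arel F))"

definition key_equal :: "'r schema \<Rightarrow> ('r, 'c) fact \<Rightarrow> ('r, 'c) fact \<Rightarrow> bool" where
  "key_equal S A B \<longleftrightarrow> frel A = frel B \<and>
     take (keylen S (frel A)) (fargs A) = take (keylen S (frel B)) (fargs B)"

definition is_db :: "'r schema \<Rightarrow> ('r, 'v, 'c) atom set \<Rightarrow> ('r, 'c) fact set \<Rightarrow> bool" where
  "is_db S q db \<longleftrightarrow> finite db \<and>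
     (\<forall>A\<in>db. frel A \<in> arel ` q \<and> length (fargs A) = arity S (frel A)) \<and>
     (\<forall>A\<in>db. \<forall>B\<in>db. rmode S (frel A) = ModeC \<and> key_equal S A B \<longrightarrow> A = B)"

definition block :: "'r schema \<Rightarrow> ('r, 'c) fact set \<Rightarrow> ('r, 'c) fact \<Rightarrow> ('r, 'c) fact set" where
  "block S db A = {B \<in> db. key_equal S A B}"

definition consistent :: "'r schema \<Rightarrow> ('r, 'c) fact set \<Rightarrow> bool" where
  "consistent S r \<longleftrightarrow> (\<forall>A\<in>r. \<forall>B\<in>r. key_equal S A B \<longrightarrow> A = B)"

definition is_repair :: "'r schema \<Rightarrow> ('r, 'c) fact set \<Rightarrow> ('r, 'c) fact set \<Rightarrow> bool" where
  "is_repair S ob r \<longleftrightarrow> r \<subseteq> ob \<and> consistent S r \<and>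
     (\<forall>r'. r \<subset> r' \<and> r' \<subseteq> ob \<longrightarrow> \<not> consistent S r')"

definition trm_val :: "('v \<Rightarrow> 'c) \<Rightarrow> ('v, 'c) trm \<Rightarrow> 'c" where
  "trm_val \<theta> t = (case t of Var v \<Rightarrow> \<theta> v | Cst c \<Rightarrow> c)"

definition inst :: "('v \<Rightarrow> 'c) \<Rightarrow> ('r, 'v, 'c) atom \<Rightarrow> ('r, 'c) fact" where
  "inst \<theta> F = Fact (arel F) (map (trm_val \<theta>) (aargs F))"

definition atom_of :: "('r, 'v, 'c) atom set \<Rightarrow> ('r, 'c) fact \<Rightarrow> ('r, 'v, 'c) atom" where
  "atom_of q A = (THE F. F \<in> q \<and> arel F = frel A)"

text \<open>Satisfaction and (semantic) logical implication of functional dependencies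
  over the variables, with tuples valued in an infinite domain (nat).\<close>
definition fd_sat :: "('v \<Rightarrow> nat) set \<Rightarrow> 'v set \<times> 'v set \<Rightarrow> bool" where
  "fd_sat R d \<longleftrightarrow> (\<forall>t\<in>R. \<forall>u\<in>R. (\<forall>v\<in>fst d. t v = u v) \<longrightarrow> (\<forall>v\<in>snd d. t v = u v))"

definition fd_implies :: "('v set \<times> 'v set) set \<Rightarrow> 'v set \<Rightarrow> 'v set \<Rightarrow> bool" where
  "fd_implies \<Sigma> X Y \<longleftrightarrow> (\<forall>R :: ('v \<Rightarrow> nat) set. (\<forall>d\<in>\<Sigma>. fd_sat R d) \<longrightarrow> fd_sat R (X, Y))"

definition Kfds :: "'r schema \<Rightarrow> ('r, 'v, 'c) atom set \<Rightarrow> ('v set \<times> 'v set) set" where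
  "Kfds S p = {(key_vars S F, atom_vars F) | F. F \<in> p}"

definition qc :: "'r schema \<Rightarrow> ('r, 'v, 'c) atom set \<Rightarrow> ('r, 'v, 'c) atom set" where
  "qc S q = {F \<in> q. rmode S (arel F) = ModeC}"

definition mgraph_edge :: "'r schema \<Rightarrow> ('r, 'v, 'c) atom set \<Rightarrow>
    ('r, 'v, 'c) atom \<Rightarrow> ('r, 'v, 'c) atom \<Rightarrow> bool" where
  "mgraph_edge S q F G \<longleftrightarrow> F \<in> q \<and> G \<in> q \<and> F \<noteq> G \<and>
     fd_implies (Kfds S (qc S q)) (atom_vars F) (key_vars S G)"

text \<open>Elementary cycle F_0 -> ... -> F_{k-1} -> F_0 of length k >= 2 in the M-graph,
  given as the list [F_0, ..., F_{k-1}].\<close>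
definition mgraph_cycle :: "'r schema \<Rightarrow> ('r, 'v, 'c) atom set \<Rightarrow> ('r, 'v, 'c) atom list \<Rightarrow> bool" where
  "mgraph_cycle S q Fs \<longleftrightarrow> 2 \<le> length Fs \<and> distinct Fs \<and>
     (\<forall>i < length Fs. mgraph_edge S q (Fs ! i) (Fs ! ((i + 1) mod length Fs)))"

definition cyc_edge :: "'a list \<Rightarrow> 'a \<Rightarrow> 'a \<Rightarrow> bool" where
  "cyc_edge Fs F G \<longleftrightarrow> (\<exists>i < length Fs. Fs ! i = F \<and> Fs ! ((i + 1) mod length Fs) = G)"

definition hook :: "'r schema \<Rightarrow> ('r, 'v, 'c) atom set \<Rightarrow> ('r, 'c) fact set \<Rightarrow>
    ('r, 'c) fact \<Rightarrow> ('r, 'c) fact \<Rightarrow> bool" where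
  "hook S q db A B \<longleftrightarrow> A \<in> db \<and> B \<in> db \<and>
     (\<exists>(\<theta> :: 'v \<Rightarrow> 'c) F G. mgraph_edge S q F G \<and> inst \<theta> ` q \<subseteq> db \<and>
        A = inst \<theta> F \<and> key_equal S B (inst \<theta> G))"

definition hookC :: "'r schema \<Rightarrow> ('r, 'v, 'c) atom set \<Rightarrow> ('r, 'c) fact set \<Rightarrow>
    ('r, 'v, 'c) atom list \<Rightarrow> ('r, 'c) fact \<Rightarrow> ('r, 'c) fact \<Rightarrow> bool" where
  "hookC S q db Fs A B \<longleftrightarrow> atom_of q A \<in> set Fs \<and> atom_of q B \<in> set Fs \<and>
     hook S q db A B \<and> cyc_edge Fs (atom_of q A) (atom_of q B)"

definition outdeg_zero :: "'r schema \<Rightarrow> ('r, 'v, 'c) atom set \<Rightarrow> ('r, 'c) fact set \<Rightarrow>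
    ('r, 'v, 'c) atom list \<Rightarrow> ('r, 'c) fact \<Rightarrow> bool" where
  "outdeg_zero S q db Fs A \<longleftrightarrow> A \<in> db \<and> atom_of q A \<in> set Fs \<and> \<not> (\<exists>B. hookC S q db Fs A B)"

definition embedding :: "'r schema \<Rightarrow> ('r, 'v, 'c) atom set \<Rightarrow> ('r, 'c) fact set \<Rightarrow>
    ('r, 'v, 'c) atom list \<Rightarrow> nat \<Rightarrow> ('r, 'c) fact list \<Rightarrow> bool" where
  "embedding S q db Fs n cs \<longleftrightarrow> 1 \<le> n \<and> length cs = n * length Fs \<and> distinct cs \<and>
     (\<forall>i < length cs. hookC S q db Fs (cs ! i) (cs ! ((i + 1) mod length cs))) \<and>
     consistent S (set cs)"

definition relevant :: "('r, 'v, 'c) atom set \<Rightarrow> ('r, 'c) fact set \<Rightarrow> ('r, 'c) fact list \<Rightarrow> bool" where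
  "relevant q db cs \<longleftrightarrow> (\<exists>\<theta> :: 'v \<Rightarrow> 'c. inst \<theta> ` q \<subseteq> db \<and> set cs \<subseteq> inst \<theta> ` q)"

definition garbage_set :: "'r schema \<Rightarrow> ('r, 'v, 'c) atom set \<Rightarrow> ('r, 'c) fact set \<Rightarrow>
    ('r, 'v, 'c) atom set \<Rightarrow> ('r, 'c) fact set \<Rightarrow> bool" where
  "garbage_set S q db q0 ob \<longleftrightarrow> ob \<subseteq> db \<and>
     (\<forall>A\<in>ob. atom_of q A \<in> q0 \<and> block S db A \<subseteq> ob) \<and>
     (\<exists>r. is_repair S ob r \<and>
        (\<forall>\<theta> :: 'v \<Rightarrow> 'c. inst \<theta> ` q \<subseteq> (db - ob) \<union> r \<longrightarrow> inst \<theta> ` q0 \<inter> r = {}))"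

definition max_garbage_set :: "'r schema \<Rightarrow> ('r, 'v, 'c) atom set \<Rightarrow> ('r, 'c) fact set \<Rightarrow>
    ('r, 'v, 'c) atom set \<Rightarrow> ('r, 'c) fact set \<Rightarrow> bool" where
  "max_garbage_set S q db q0 ob \<longleftrightarrow> garbage_set S q db q0 ob \<and>
     (\<forall>ob'. garbage_set S q db q0 ob' \<longrightarrow> ob' \<subseteq> ob)"

definition lemma19_conds :: "'r schema \<Rightarrow> ('r, 'v, 'c) atom set \<Rightarrow> ('r, 'c) fact set \<Rightarrow>
    ('r, 'v, 'c) atom list \<Rightarrow> ('r, 'c) fact set \<Rightarrow> bool" where
  "lemma19_conds S q db Fs ob \<longleftrightarrow> ob \<subseteq> db \<and>
     (\<forall>A. outdeg_zero S q db Fs A \<longrightarrow> A \<in> ob) \<and>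
     (\<forall>cs. embedding S q db Fs 1 cs \<and> \<not> relevant q db cs \<longrightarrow> set cs \<subseteq> ob) \<and>
     (\<forall>n cs. 2 \<le> n \<and> embedding S q db Fs n cs \<longrightarrow> set cs \<subseteq> ob) \<and>
     (\<forall>cs. embedding S q db Fs 1 cs \<and> relevant q db cs \<and> set cs \<inter> ob \<noteq> {} \<longrightarrow> set cs \<subseteq> ob) \<and>
     (\<forall>A\<in>ob. block S db A \<subseteq> ob)"

end

theory Submission
  imports Defs
begin


lemma ke_refl[simp]: "key_equal S A A" by (simp add: key_equal_def)
lemma ke_sym: "key_equal S A B \<Longrightarrow> key_equal S B A" by (auto simp add: key_equal_def)
lemma ke_trans: "key_equal S A B \<Longrightarrow> key_equal S B C \<Longrightarrow> key_equal S A C" by (auto simp add: key_equal_def)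

locale L19 =
  fixes S :: "'r schema" and q :: "('r, 'v, 'c) atom set" and db :: "('r, 'c) fact set"
    and Fs :: "('r, 'v, 'c) atom list" and ob :: "('r, 'c) fact set"
  assumes sjf: "sjf_query S q" and cyc: "mgraph_cycle S q Fs" and isdb: "is_db S q db"
    and conds: "lemma19_conds S q db Fs ob"
begin

abbreviation "k \<equiv> length Fs"

lemma k2: "2 \<le> k" using cyc by (simp add: mgraph_cycle_def)
lemma kpos: "0 < k" using k2 by linarith
lemma Fs_ne: "Fs \<noteq> []" using kpos by auto
lemma distFs: "distinct Fs" using cyc by (simp add: mgraph_cycle_def)
lemma edges: "i < k \<Longrightarrow> mgraph_edge S q (Fs ! i) (Fs ! (Suc i mod k))"
  using cyc by (simp add: mgraph_cycle_def)
lemma Fs_q: "set Fs \<subseteq> q"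
proof
  fix F assume "F \<in> set Fs"
  then obtain i where "i < k" "F = Fs ! i" by (metis in_set_conv_nth)
  then show "F \<in> q" using edges[of i] by (simp add: mgraph_edge_def)
qed
lemma nth_q: "Fs ! (j mod k) \<in> q" using Fs_q kpos by auto
lemma nth_q': "j < k \<Longrightarrow> Fs ! j \<in> q" using Fs_q by auto
lemma injq: "inj_on arel q" using sjf by (simp add: sjf_query_def)

lemma atom_of_eq: "F \<in> q \<Longrightarrow> frel A = arel F \<Longrightarrow> atom_of q A = F"
  unfolding atom_of_def
  by (rule the_equality) (auto dest: inj_onD[OF injq])

lemma frel_inst[simp]: "frel (inst \<theta> F) = arel F" by (simp add: inst_def)

lemma atom_of_inst: "F \<in> q \<Longrightarrow> atom_of q (inst \<theta> F) = F"
  by (simp add: atom_of_eq)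

lemma db_frel: "A \<in> db \<Longrightarrow> frel A \<in> arel ` q" using isdb by (simp add: is_db_def)

lemma atom_of_db: "A \<in> db \<Longrightarrow> atom_of q A \<in> q \<and> arel (atom_of q A) = frel A"
proof -
  assume "A \<in> db"
  then obtain F where "F \<in> q" "frel A = arel F" using db_frel by force
  then show ?thesis using atom_of_eq by auto
qed

lemma ke_atom: "key_equal S A B \<Longrightarrow> atom_of q A = atom_of q B"
  by (simp add: key_equal_def atom_of_def)

lemma nth_inj: "i < k \<Longrightarrow> j < k \<Longrightarrow> Fs ! i = Fs ! j \<Longrightarrow> i = j"
  using distFs by (simp add: nth_eq_iff_index_eq)

lemma cyc_edge_next: "cyc_edge Fs (Fs ! j) G \<Longrightarrow> j < k \<Longrightarrow> G = Fs ! (Suc j mod k)"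
  unfolding cyc_edge_def using nth_inj by auto

lemma hookC_db: "hookC S q db Fs A B \<Longrightarrow> A \<in> db \<and> B \<in> db"
  by (simp add: hookC_def hook_def)

lemma hookC_atoms: "hookC S q db Fs A B \<Longrightarrow> atom_of q A \<in> set Fs \<and> atom_of q B \<in> set Fs"
  by (simp add: hookC_def)

lemma hookC_index: "hookC S q db Fs A B \<Longrightarrow> atom_of q A = Fs ! i \<Longrightarrow> i < k \<Longrightarrow>
   atom_of q B = Fs ! (Suc i mod k)"
  unfolding hookC_def using cyc_edge_next by auto

lemma hookC_theta:
  assumes "inst \<theta> ` q \<subseteq> db" "i < k"
  shows "hookC S q db Fs (inst \<theta> (Fs ! i)) (inst \<theta> (Fs ! (Suc i mod k)))"
proof -
  have k0: "0 < k" using k2 by linarith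
  have i1: "Suc i mod k < k" using k0 by simp
  have F: "Fs ! i \<in> q" "Fs ! (Suc i mod k) \<in> q" using Fs_q assms(2) i1 by auto
  have a1: "atom_of q (inst \<theta> (Fs ! i)) = Fs ! i" using F atom_of_inst by blast
  have a2: "atom_of q (inst \<theta> (Fs ! (Suc i mod k))) = Fs ! (Suc i mod k)" using F atom_of_inst by blast
  have h: "hook S q db (inst \<theta> (Fs ! i)) (inst \<theta> (Fs ! (Suc i mod k)))"
    unfolding hook_def using assms F edges[OF assms(2)] ke_refl by blast
  show ?thesis unfolding hookC_def a1 a2 cyc_edge_def using h assms(2) i1 by auto
qed


lemma agree_inst: "inst \<theta> F = inst \<theta>' F \<Longrightarrow> v \<in> atom_vars F \<Longrightarrow> \<theta> v = \<theta>' v"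
  unfolding inst_def atom_vars_def
  by (auto simp: map_eq_conv trm_val_def split: trm.splits dest!: bspec)

lemma ke_inst: "(\<forall>v \<in> key_vars S G. \<theta> v = \<theta>' v) \<Longrightarrow> key_equal S (inst \<theta> G) (inst \<theta>' G)"
proof -
  assume a: "\<forall>v \<in> key_vars S G. \<theta> v = \<theta>' v"
  have "\<forall>t \<in> set (take (keylen S (arel G)) (aargs G)). trm_val \<theta> t = trm_val \<theta>' t"
  proof
    fix t assume "t \<in> set (take (keylen S (arel G)) (aargs G))"
    then obtain i where i: "i < keylen S (arel G)" "i < length (aargs G)" "aargs G ! i = t"
      by (auto simp: in_set_conv_nth)
    show "trm_val \<theta> t = trm_val \<theta>' t"
    proof (cases t)
      case (Var v)
      then have "v \<in> key_vars S G" using i by (auto simp: key_vars_def)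
      then show ?thesis using a Var by (simp add: trm_val_def)
    next
      case (Cst c) then show ?thesis by (simp add: trm_val_def)
    qed
  qed
  then show ?thesis by (simp add: key_equal_def inst_def take_map map_eq_conv)
qed

lemma fd_agree:
  fixes \<theta> \<theta>' :: "'v \<Rightarrow> 'c"
  assumes "fd_implies \<Sigma> X Y"
    and "\<forall>d\<in>\<Sigma>. (\<forall>v\<in>fst d. \<theta> v = \<theta>' v) \<longrightarrow> (\<forall>v\<in>snd d. \<theta> v = \<theta>' v)"
    and "\<forall>v\<in>X. \<theta> v = \<theta>' v"
  shows "\<forall>v\<in>Y. \<theta> v = \<theta>' v"
proof -
  define t :: "'v \<Rightarrow> nat" where "t = (\<lambda>v. 0)"
  define u :: "'v \<Rightarrow> nat" where "u = (\<lambda>v. if \<theta> v = \<theta>' v then 0 else 1)"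
  have eq: "\<And>Z. (\<forall>v\<in>Z. t v = u v) \<longleftrightarrow> (\<forall>v\<in>Z. \<theta> v = \<theta>' v)"
    by (auto simp: t_def u_def split: if_splits)
  have eq2: "\<And>Z. (\<forall>v\<in>Z. u v = t v) \<longleftrightarrow> (\<forall>v\<in>Z. \<theta> v = \<theta>' v)"
    by (auto simp: t_def u_def split: if_splits)
  have "fd_sat {t, u} d" if d: "d \<in> \<Sigma>" for d
    unfolding fd_sat_def
  proof (intro ballI impI)
    fix a b v assume ab: "a \<in> {t, u}" "b \<in> {t, u}" "\<forall>v\<in>fst d. a v = b v" "v \<in> snd d"
    have imp: "(\<forall>v\<in>fst d. \<theta> v = \<theta>' v) \<longrightarrow> (\<forall>v\<in>snd d. \<theta> v = \<theta>' v)" using assms(2) d by blast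
    show "a v = b v"
    proof (cases "a = b")
      case True then show ?thesis by simp
    next
      case False
      then have "(a = t \<and> b = u) \<or> (a = u \<and> b = t)" using ab(1,2) by blast
      then show ?thesis
      proof
        assume "a = t \<and> b = u"
        then show ?thesis using ab(3,4) imp eq[of "fst d"] eq[of "snd d"] by blast
      next
        assume "a = u \<and> b = t"
        then show ?thesis using ab(3,4) imp eq2[of "fst d"] eq2[of "snd d"] by blast
      qed
    qed
  qed
  then have "\<forall>d\<in>\<Sigma>. fd_sat {t, u} d" by blast
  then have "fd_sat {t, u} (X, Y)" using assms(1) unfolding fd_implies_def by blast
  then show ?thesis using assms(3) unfolding fd_sat_def by (auto simp: eq)
qed


lemma hookC_unpack:
  assumes "hookC S q db Fs A B"
  shows "\<exists>\<theta> i. i < k \<and> inst \<theta> ` q \<subseteq> db \<and> A = inst \<theta> (Fs ! i) \<and>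
           key_equal S B (inst \<theta> (Fs ! (Suc i mod k)))"
proof -
  obtain \<theta> F G where h: "mgraph_edge S q F G" "inst \<theta> ` q \<subseteq> db" "A = inst \<theta> F"
     "key_equal S B (inst \<theta> G)"
    using assms unfolding hookC_def hook_def by blast
  have FG: "F \<in> q" "G \<in> q" using h(1) by (auto simp: mgraph_edge_def)
  have aA: "atom_of q A = F" using h(3) FG atom_of_inst by simp
  have aB: "atom_of q B = G" using ke_atom[OF h(4)] FG atom_of_inst by simp
  have "F \<in> set Fs" using assms aA by (simp add: hookC_def)
  then obtain i where i: "i < k" "F = Fs ! i" by (metis in_set_conv_nth)
  have "G = Fs ! (Suc i mod k)" using hookC_index[OF assms] aA aB i by simp
  then show ?thesis using h i by blast
qed

lemma theta_agree_c:
  fixes \<theta> \<theta>' :: "'v \<Rightarrow> 'c"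
  assumes "inst \<theta> ` q \<subseteq> db" "inst \<theta>' ` q \<subseteq> db"
  shows "\<forall>d\<in>Kfds S (qc S q). (\<forall>v\<in>fst d. \<theta> v = \<theta>' v) \<longrightarrow> (\<forall>v\<in>snd d. \<theta> v = \<theta>' v)"
proof (intro ballI impI)
  fix d v assume d: "d \<in> Kfds S (qc S q)" and ag: "\<forall>v\<in>fst d. \<theta> v = \<theta>' v" and v: "v \<in> snd d"
  obtain H where H: "H \<in> q" "rmode S (arel H) = ModeC" "d = (key_vars S H, atom_vars H)"
    using d by (auto simp: Kfds_def qc_def)
  have ke: "key_equal S (inst \<theta> H) (inst \<theta>' H)" using ke_inst ag H(3) by simp
  have "inst \<theta> H \<in> db" "inst \<theta>' H \<in> db" using assms H(1) by auto
  then have "inst \<theta> H = inst \<theta>' H" using isdb ke H(2) unfolding is_db_def by simp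
  then show "\<theta> v = \<theta>' v" using agree_inst v H(3) by simp
qed

lemma hookC_unique:
  assumes "hookC S q db Fs A B" "hookC S q db Fs A B'"
  shows "key_equal S B B'"
proof -
  obtain \<theta> i where a: "i < k" "inst \<theta> ` q \<subseteq> db" "A = inst \<theta> (Fs ! i)"
           "key_equal S B (inst \<theta> (Fs ! (Suc i mod k)))"
    using hookC_unpack[OF assms(1)] by blast
  obtain \<theta>' i' where b: "i' < k" "inst \<theta>' ` q \<subseteq> db" "A = inst \<theta>' (Fs ! i')"
           "key_equal S B' (inst \<theta>' (Fs ! (Suc i' mod k)))"
    using hookC_unpack[OF assms(2)] by blast
  have "Fs ! i \<in> q" "Fs ! i' \<in> q" using a(1) b(1) Fs_q by auto
  then have "Fs ! i = Fs ! i'" using a(3) b(3) atom_of_inst by metis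
  then have ii: "i' = i" using nth_inj a(1) b(1) by simp
  have ag: "\<forall>v\<in>atom_vars (Fs ! i). \<theta> v = \<theta>' v" using agree_inst a(3) b(3) ii by metis
  have fd: "fd_implies (Kfds S (qc S q)) (atom_vars (Fs ! i)) (key_vars S (Fs ! (Suc i mod k)))"
    using edges[OF a(1)] by (simp add: mgraph_edge_def)
  have "\<forall>v\<in>key_vars S (Fs ! (Suc i mod k)). \<theta> v = \<theta>' v"
    using fd_agree[OF fd theta_agree_c[OF a(2) b(2)] ag] .
  then have "key_equal S (inst \<theta> (Fs ! (Suc i mod k))) (inst \<theta>' (Fs ! (Suc i mod k)))"
    using ke_inst by blast
  then show ?thesis using a(4) b(4) ii ke_sym ke_trans by metis
qed

lemma hookC_ke:
  assumes "hookC S q db Fs A B" "key_equal S B B'" "B' \<in> db"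
  shows "hookC S q db Fs A B'"
proof -
  have at: "atom_of q B' = atom_of q B" using ke_atom assms(2) by simp
  obtain \<theta> F G where h: "mgraph_edge S q F G" "inst \<theta> ` q \<subseteq> db" "A = inst \<theta> F"
     "key_equal S B (inst \<theta> G)"
    using assms(1) unfolding hookC_def hook_def by blast
  have "key_equal S B' (inst \<theta> G)" using h(4) assms(2) ke_sym ke_trans by metis
  then have "hook S q db A B'" using h assms(3) hookC_db[OF assms(1)] unfolding hook_def by blast
  then show ?thesis using assms(1) at unfolding hookC_def by simp
qed


lemma c_sub: "ob \<subseteq> db" using conds by (simp add: lemma19_conds_def)
lemma c1: "outdeg_zero S q db Fs A \<Longrightarrow> A \<in> ob" using conds by (simp add: lemma19_conds_def)
lemma c2: "embedding S q db Fs 1 cs \<Longrightarrow> \<not> relevant q db cs \<Longrightarrow> set cs \<subseteq> ob"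
  using conds by (simp add: lemma19_conds_def)
lemma c3: "2 \<le> n \<Longrightarrow> embedding S q db Fs n cs \<Longrightarrow> set cs \<subseteq> ob"
  using conds by (simp add: lemma19_conds_def)
lemma c4: "embedding S q db Fs 1 cs \<Longrightarrow> relevant q db cs \<Longrightarrow> set cs \<inter> ob \<noteq> {} \<Longrightarrow> set cs \<subseteq> ob"
  using conds by (simp add: lemma19_conds_def)
lemma c5: "A \<in> ob \<Longrightarrow> block S db A \<subseteq> ob" using conds by (simp add: lemma19_conds_def)

lemma c5': "A \<in> ob \<Longrightarrow> key_equal S A B \<Longrightarrow> B \<in> db \<Longrightarrow> B \<in> ob"
  using c5 by (auto simp: block_def)

definition Eth :: "('v \<Rightarrow> 'c) \<Rightarrow> ('r, 'c) fact list" where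
  "Eth \<theta> = map (\<lambda>i. inst \<theta> (Fs ! i)) [0..<k]"

lemma set_Eth: "set (Eth \<theta>) = inst \<theta> ` set Fs"
  apply (auto simp: Eth_def in_set_conv_nth image_iff)
   apply (metis nth_mem)
  by force

lemma inst_eq_atom: "F \<in> q \<Longrightarrow> G \<in> q \<Longrightarrow> inst \<theta> F = inst \<theta>' G \<Longrightarrow> F = G"
  using atom_of_inst by metis

lemma len_Eth: "length (Eth \<theta>) = k" by (simp add: Eth_def)
lemma nth_Eth: "i < k \<Longrightarrow> Eth \<theta> ! i = inst \<theta> (Fs ! i)" by (simp add: Eth_def)

lemma theta_emb:
  assumes "inst \<theta> ` q \<subseteq> db"
  shows "embedding S q db Fs 1 (Eth \<theta>) \<and> relevant q db (Eth \<theta>)"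
proof -
  have inj: "inj_on (\<lambda>i. inst \<theta> (Fs ! i)) {0..<k}"
  proof (rule inj_onI)
    fix i j assume "i \<in> {0..<k}" "j \<in> {0..<k}" "inst \<theta> (Fs ! i) = inst \<theta> (Fs ! j)"
    then have ij: "i < k" "j < k" "inst \<theta> (Fs ! i) = inst \<theta> (Fs ! j)" by auto
    then have "Fs ! i = Fs ! j" using inst_eq_atom[OF nth_q' nth_q'] by blast
    then show "i = j" using nth_inj ij by blast
  qed
  have dist: "distinct (Eth \<theta>)" unfolding Eth_def using inj by (simp add: distinct_map)
  have hk: "\<forall>i < length (Eth \<theta>). hookC S q db Fs (Eth \<theta> ! i) (Eth \<theta> ! ((i + 1) mod length (Eth \<theta>)))"
  proof (intro allI impI)
    fix i assume "i < length (Eth \<theta>)"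
    then have i: "i < k" by (simp only: len_Eth)
    have i1: "Suc i mod k < k" using mod_less_divisor[OF kpos] by blast
    have "hookC S q db Fs (Eth \<theta> ! i) (Eth \<theta> ! (Suc i mod k))"
      using hookC_theta[OF assms i] by (simp only: nth_Eth[OF i] nth_Eth[OF i1])
    then show "hookC S q db Fs (Eth \<theta> ! i) (Eth \<theta> ! ((i + 1) mod length (Eth \<theta>)))"
      by (simp only: len_Eth Suc_eq_plus1)
  qed
  have cons: "consistent S (set (Eth \<theta>))"
    unfolding consistent_def set_Eth
  proof (intro ballI impI)
    fix A B assume "A \<in> inst \<theta> ` set Fs" "B \<in> inst \<theta> ` set Fs" "key_equal S A B"
    then obtain F G where FG: "F \<in> set Fs" "G \<in> set Fs" "A = inst \<theta> F" "B = inst \<theta> G"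
      "key_equal S A B" by blast
    have "atom_of q A = F" "atom_of q B = G" using FG Fs_q atom_of_inst by auto
    then show "A = B" using ke_atom[OF FG(5)] FG by simp
  qed
  have rel: "relevant q db (Eth \<theta>)"
    unfolding relevant_def set_Eth
    by (rule exI[of _ \<theta>]) (use assms Fs_q in blast)
  have "embedding S q db Fs 1 (Eth \<theta>)"
    unfolding embedding_def using dist hk cons by (simp only: len_Eth) simp
  then show ?thesis using rel by blast
qed

lemma emb_hook: "embedding S q db Fs n cs \<Longrightarrow> j < length cs \<Longrightarrow>
   hookC S q db Fs (cs ! j) (cs ! (Suc j mod length cs))"
  unfolding embedding_def by (metis Suc_eq_plus1)

lemma emb_db: "embedding S q db Fs n cs \<Longrightarrow> x \<in> set cs \<Longrightarrow> x \<in> db \<and> atom_of q x \<in> set Fs"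
  by (metis emb_hook hookC_atoms hookC_db in_set_conv_nth)

lemma succ_out: "A \<notin> ob \<Longrightarrow> hookC S q db Fs A B \<Longrightarrow> B \<notin> ob"
proof
  assume A: "A \<notin> ob" and h: "hookC S q db Fs A B" and B: "B \<in> ob"
  obtain \<theta> i where a: "i < k" "inst \<theta> ` q \<subseteq> db" "A = inst \<theta> (Fs ! i)"
           "key_equal S B (inst \<theta> (Fs ! (Suc i mod k)))"
    using hookC_unpack[OF h] by blast
  have k0: "0 < k" using kpos .
  have mem: "Fs ! (Suc i mod k) \<in> q" using nth_q .
  then have "inst \<theta> (Fs ! (Suc i mod k)) \<in> ob" using c5' B a(4) a(2) by blast
  moreover have "inst \<theta> (Fs ! (Suc i mod k)) \<in> set (Eth \<theta>)" using set_Eth k0 by simp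
  ultimately have "set (Eth \<theta>) \<subseteq> ob" using c4 theta_emb[OF a(2)] by blast
  moreover have "A \<in> set (Eth \<theta>)" using set_Eth a(1,3) by simp
  ultimately show False using A by blast
qed


lemma find_edge:
  fixes L :: nat
  assumes "0 < L" "a < L" "Q a" "b < L" "\<not> Q b"
  shows "\<exists>p<L. \<not> Q p \<and> Q (Suc p mod L)"
proof (rule ccontr)
  assume "\<not> ?thesis"
  then have step: "\<And>p. p < L \<Longrightarrow> \<not> Q p \<Longrightarrow> \<not> Q (Suc p mod L)" by blast
  have "\<not> Q ((b + m) mod L)" for m
  proof (induction m)
    case 0 then show ?case using assms by simp
  next
    case (Suc m)
    have "(b + m) mod L < L" using assms(1) by simp
    then have "\<not> Q (Suc ((b + m) mod L) mod L)" using step Suc by blast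
    then show ?case by (simp add: mod_Suc_eq)
  qed
  from this[of "a + L - b"] have "\<not> Q ((a + L) mod L)" using assms(4) by simp
  then show False using assms(2,3) by simp
qed

lemma mod_reach: "j < k \<Longrightarrow> i < k \<Longrightarrow> (j + (i + k - j)) mod k = i"
  by simp

lemma block_iff: "B \<in> block S db A \<longleftrightarrow> B \<in> db \<and> key_equal S A B"
  by (simp add: block_def)

definition ginv :: "('r, 'c) fact set \<Rightarrow> ('r, 'c) fact set \<Rightarrow> bool" where
  "ginv P r \<longleftrightarrow> P \<subseteq> ob \<and> (\<forall>A\<in>P. block S db A \<subseteq> P \<and> atom_of q A \<in> set Fs) \<and> r \<subseteq> P \<and>
     (\<forall>A\<in>P. \<exists>B\<in>r. key_equal S A B) \<and> consistent S r \<and>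
     (\<forall>A\<in>r. \<forall>B. hookC S q db Fs A B \<longrightarrow> B \<in> P) \<and>
     (\<forall>\<theta> :: 'v \<Rightarrow> 'c. inst \<theta> ` q \<subseteq> db \<longrightarrow> \<not> inst \<theta> ` set Fs \<subseteq> r)"

lemma ginv_closed: "ginv P r \<Longrightarrow> A \<in> P \<Longrightarrow> key_equal S A B \<Longrightarrow> B \<in> db \<Longrightarrow> B \<in> P"
  unfolding ginv_def block_def by blast

lemma stay:
  assumes g: "ginv P r" and c: "consistent S r'" and rr: "r \<subseteq> r'" and new: "\<forall>x\<in>r' - r. x \<notin> P"
    and th: "inst \<theta> ` q \<subseteq> db" "inst \<theta> ` set Fs \<subseteq> r'" and j: "j < k" "inst \<theta> (Fs ! j) \<in> P"
  shows False
proof -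
  have inr': "\<And>i. i < k \<Longrightarrow> inst \<theta> (Fs ! i) \<in> r'" using th(2) by auto
  have all: "inst \<theta> (Fs ! ((j + m) mod k)) \<in> r" for m
  proof (induction m)
    case 0 then show ?case using j new inr' by auto
  next
    case (Suc m)
    have x: "(j + m) mod k < k" using mod_less_divisor[OF kpos] by blast
    have "hookC S q db Fs (inst \<theta> (Fs ! ((j + m) mod k))) (inst \<theta> (Fs ! (Suc ((j + m) mod k) mod k)))"
      using hookC_theta[OF th(1) x] .
    then have "inst \<theta> (Fs ! (Suc ((j + m) mod k) mod k)) \<in> P"
      using g Suc unfolding ginv_def by blast
    moreover have "Suc ((j + m) mod k) mod k = (j + Suc m) mod k" by (simp add: mod_Suc_eq)
    moreover have "(j + Suc m) mod k < k" using mod_less_divisor[OF kpos] by blast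
    ultimately show ?case using new inr' by auto
  qed
  have "inst \<theta> ` set Fs \<subseteq> r"
  proof
    fix x assume "x \<in> inst \<theta> ` set Fs"
    then obtain i where i: "i < k" "x = inst \<theta> (Fs ! i)" by (auto simp: in_set_conv_nth)
    show "x \<in> r" using all[of "i + k - j"] mod_reach[OF j(1) i(1)] i by simp
  qed
  then show False using g th(1) unfolding ginv_def by blast
qed

lemma add_one:
  assumes g: "ginv P r" and A: "A \<in> ob" "A \<notin> P" "atom_of q A \<in> set Fs"
    and succ: "\<forall>B. hookC S q db Fs A B \<longrightarrow> B \<in> P"
  shows "ginv (P \<union> block S db A) (insert A r) \<and> P \<subset> P \<union> block S db A"
proof -
  have Adb: "A \<in> db" using A(1) c_sub by blast
  have Ab: "A \<in> block S db A" using Adb ke_refl by (simp add: block_iff)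
  let ?P = "P \<union> block S db A" and ?r = "insert A r"
  have P1: "?P \<subseteq> ob" using g c5[OF A(1)] unfolding ginv_def by blast
  have P2: "\<forall>B\<in>?P. block S db B \<subseteq> ?P \<and> atom_of q B \<in> set Fs"
  proof
    fix B assume B: "B \<in> ?P"
    show "block S db B \<subseteq> ?P \<and> atom_of q B \<in> set Fs"
    proof (cases "B \<in> P")
      case True then show ?thesis using g unfolding ginv_def by blast
    next
      case False
      then have "key_equal S A B" using B by (simp add: block_iff)
      then show ?thesis using A(3) ke_atom[of A B] ke_trans[of S A B] by (auto simp: block_iff)
    qed
  qed
  have P3: "?r \<subseteq> ?P" using g Ab unfolding ginv_def by blast
  have P4: "\<forall>B\<in>?P. \<exists>C\<in>?r. key_equal S B C"
    using g ke_sym unfolding ginv_def block_def by blast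
  have P5: "consistent S ?r"
    unfolding consistent_def
  proof (intro ballI impI)
    fix B C assume BC: "B \<in> ?r" "C \<in> ?r" "key_equal S B C"
    have notke: "\<And>D. D \<in> r \<Longrightarrow> \<not> key_equal S D A"
      using ginv_closed[OF g] Adb A(2) g unfolding ginv_def by blast
    show "B = C"
    proof (cases "B = A \<or> C = A")
      case True then show ?thesis using BC notke ke_sym by blast
    next
      case False then show ?thesis using BC g unfolding ginv_def consistent_def by blast
    qed
  qed
  have P6: "\<forall>B\<in>?r. \<forall>C. hookC S q db Fs B C \<longrightarrow> C \<in> ?P" using g succ unfolding ginv_def by blast
  have P7: "\<forall>\<theta> :: 'v \<Rightarrow> 'c. inst \<theta> ` q \<subseteq> db \<longrightarrow> \<not> inst \<theta> ` set Fs \<subseteq> ?r"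
  proof (intro allI impI notI)
    fix \<theta> :: "'v \<Rightarrow> 'c" assume th: "inst \<theta> ` q \<subseteq> db" "inst \<theta> ` set Fs \<subseteq> ?r"
    have new: "\<forall>x\<in>?r - r. x \<notin> P" using A(2) by blast
    have nP: "\<And>j. j < k \<Longrightarrow> inst \<theta> (Fs ! j) \<notin> P"
      using stay[OF g P5 _ new th] by blast
    have "inst \<theta> (Fs ! 0) \<in> ?r" using th(2) kpos by (meson image_subset_iff nth_mem)
    then have "inst \<theta> (Fs ! 0) = A" using nP[of 0] kpos g unfolding ginv_def by blast
    then have "inst \<theta> (Fs ! (Suc 0 mod k)) \<in> P" using succ hookC_theta[OF th(1) kpos] by metis
    moreover have "Suc 0 mod k < k" using mod_less_divisor[OF kpos] by blast
    ultimately show False using nP by blast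
  qed
  have "ginv ?P ?r" unfolding ginv_def using P1 P2 P3 P4 P5 P6 P7 by blast
  moreover have "P \<subset> ?P" using Ab A(2) by blast
  ultimately show ?thesis by blast
qed


lemma ext1:
  assumes g: "ginv P r" and o: "outdeg_zero S q db Fs A" and A: "A \<notin> P"
  shows "\<exists>P' r'. ginv P' r' \<and> P \<subset> P'"
proof -
  have "A \<in> ob" using c1 o .
  moreover have "atom_of q A \<in> set Fs" "\<forall>B. hookC S q db Fs A B \<longrightarrow> B \<in> P"
    using o by (auto simp: outdeg_zero_def)
  ultimately show ?thesis using add_one[OF g _ A] by blast
qed

lemma ext4:
  assumes g: "ginv P r" and e: "embedding S q db Fs 1 cs" and rel: "relevant q db cs"
    and x: "x \<in> set cs" "x \<in> P" and y: "y \<in> set cs" "y \<notin> P"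
  shows "\<exists>P' r'. ginv P' r' \<and> P \<subset> P'"
proof -
  let ?L = "length cs"
  have L0: "0 < ?L" using x(1) by auto
  obtain a where a: "a < ?L" "cs ! a = x" using x(1) by (auto simp: in_set_conv_nth)
  obtain b where b: "b < ?L" "cs ! b = y" using y(1) by (auto simp: in_set_conv_nth)
  obtain p where p: "p < ?L" "cs ! p \<notin> P" "cs ! (Suc p mod ?L) \<in> P"
    using find_edge[of ?L a "\<lambda>i. cs ! i \<in> P" b] L0 a b x y by blast
  have "set cs \<inter> ob \<noteq> {}" using x g unfolding ginv_def by blast
  then have sub: "set cs \<subseteq> ob" using c4 e rel by blast
  have A: "cs ! p \<in> ob" "atom_of q (cs ! p) \<in> set Fs" using sub p(1) emb_db[OF e] by auto
  have "\<forall>B. hookC S q db Fs (cs ! p) B \<longrightarrow> B \<in> P"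
  proof (intro allI impI)
    fix B assume h: "hookC S q db Fs (cs ! p) B"
    have "key_equal S (cs ! (Suc p mod ?L)) B" using hookC_unique[OF emb_hook[OF e p(1)] h] .
    then show "B \<in> P" using ginv_closed[OF g p(3)] hookC_db[OF h] by blast
  qed
  then show ?thesis using add_one[OF g A(1) p(2) A(2)] by blast
qed

lemma ext23:
  assumes g: "ginv P r" and e: "embedding S q db Fs n cs" and nr: "\<not> (n = 1 \<and> relevant q db cs)"
    and sub: "set cs \<subseteq> ob" and out: "\<not> set cs \<subseteq> P"
  shows "\<exists>P' r'. ginv P' r' \<and> P \<subset> P'"
proof -
  let ?L = "length cs"
  have eL: "?L = n * k" "1 \<le> n" "distinct cs" "consistent S (set cs)"
    using e by (auto simp: embedding_def)
  have L0: "0 < ?L" using eL kpos by simp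
  let ?P = "P \<union> (\<Union>x\<in>set cs. block S db x)" and ?r = "r \<union> (set cs - P)"
  have csdb: "\<And>x. x \<in> set cs \<Longrightarrow> x \<in> db \<and> atom_of q x \<in> set Fs" using emb_db[OF e] by blast
  have Pob: "P \<subseteq> ob" "r \<subseteq> P" using g unfolding ginv_def by auto
  have P1: "?P \<subseteq> ob" using Pob c5 sub by blast
  have P2: "\<forall>B\<in>?P. block S db B \<subseteq> ?P \<and> atom_of q B \<in> set Fs"
  proof
    fix B assume B: "B \<in> ?P"
    show "block S db B \<subseteq> ?P \<and> atom_of q B \<in> set Fs"
    proof (cases "B \<in> P")
      case True then show ?thesis using g unfolding ginv_def by blast
    next
      case False
      then obtain x where x: "x \<in> set cs" "key_equal S x B" using B by (auto simp: block_iff)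
      have "block S db B \<subseteq> block S db x" using x(2) ke_trans[of S x B] by (auto simp: block_iff)
      moreover have "atom_of q B \<in> set Fs" using csdb[OF x(1)] ke_atom[OF x(2)] by simp
      ultimately show ?thesis using x(1) by blast
    qed
  qed
  have P3: "?r \<subseteq> ?P" using Pob csdb ke_refl by (auto simp: block_iff)
  have P4: "\<forall>B\<in>?P. \<exists>C\<in>?r. key_equal S B C"
  proof
    fix B assume B: "B \<in> ?P"
    show "\<exists>C\<in>?r. key_equal S B C"
    proof (cases "B \<in> P")
      case True then show ?thesis using g unfolding ginv_def by blast
    next
      case False
      then obtain x where x: "x \<in> set cs" "key_equal S x B" "B \<in> db" using B by (auto simp: block_iff)
      show ?thesis
      proof (cases "x \<in> P")
        case True then have "B \<in> P" using ginv_closed[OF g _ x(2) x(3)] by blast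
        then show ?thesis using False by blast
      next
        case False then show ?thesis using x ke_sym by blast
      qed
    qed
  qed
  have P5: "consistent S ?r"
    unfolding consistent_def
  proof (intro ballI impI)
    fix B C assume BC: "B \<in> ?r" "C \<in> ?r" "key_equal S B C"
    have cr: "consistent S r" using g unfolding ginv_def by blast
    show "B = C"
    proof (cases "B \<in> r")
      case Br: True
      show ?thesis
      proof (cases "C \<in> r")
        case True then show ?thesis using Br BC cr unfolding consistent_def by blast
      next
        case False
        then have "C \<in> set cs" "C \<notin> P" using BC by auto
        moreover have "C \<in> P" using ginv_closed[OF g _ BC(3)] Br Pob csdb calculation(1) by blast
        ultimately show ?thesis by blast
      qed
    next
      case Bn: False
      then have B: "B \<in> set cs" "B \<notin> P" using BC by auto
      show ?thesis
      proof (cases "C \<in> r")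
        case True
        then have "B \<in> P" using ginv_closed[OF g _ ke_sym[OF BC(3)]] Pob csdb B(1) by blast
        then show ?thesis using B by blast
      next
        case False
        then have "C \<in> set cs" using BC by auto
        then show ?thesis using B(1) BC(3) eL(4) unfolding consistent_def by blast
      qed
    qed
  qed
  have P6: "\<forall>B\<in>?r. \<forall>C. hookC S q db Fs B C \<longrightarrow> C \<in> ?P"
  proof (intro ballI allI impI)
    fix B C assume B: "B \<in> ?r" and h: "hookC S q db Fs B C"
    show "C \<in> ?P"
    proof (cases "B \<in> r")
      case True then show ?thesis using g h unfolding ginv_def by blast
    next
      case False
      then have "B \<in> set cs" using B by auto
      then obtain p where p: "p < ?L" "cs ! p = B" by (auto simp: in_set_conv_nth)
      have "key_equal S (cs ! (Suc p mod ?L)) C" using hookC_unique[OF emb_hook[OF e p(1)]] h p(2) by blast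
      moreover have "cs ! (Suc p mod ?L) \<in> set cs" using L0 by simp
      ultimately show ?thesis using hookC_db[OF h] by (auto simp: block_iff)
    qed
  qed
  have P7: "\<forall>\<theta> :: 'v \<Rightarrow> 'c. inst \<theta> ` q \<subseteq> db \<longrightarrow> \<not> inst \<theta> ` set Fs \<subseteq> ?r"
  proof (intro allI impI notI)
    fix \<theta> :: "'v \<Rightarrow> 'c" assume th: "inst \<theta> ` q \<subseteq> db" "inst \<theta> ` set Fs \<subseteq> ?r"
    have new: "\<forall>x\<in>?r - r. x \<notin> P" by blast
    have nP: "\<And>j. j < k \<Longrightarrow> inst \<theta> (Fs ! j) \<notin> P"
      using stay[OF g P5 _ new th] by blast
    define c where "c m = inst \<theta> (Fs ! (m mod k))" for m
    have cr: "c m \<in> ?r" for m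
      using th(2) unfolding c_def by (meson image_subset_iff kpos mod_less_divisor nth_mem)
    have cnP: "c m \<notin> P" for m unfolding c_def using nP kpos by simp
    have ccs: "c m \<in> set cs" for m using cr[of m] cnP[of m] Pob by blast
    obtain p0 where p0: "p0 < ?L" "cs ! p0 = c 0" using ccs[of 0] by (auto simp: in_set_conv_nth)
    have cm: "c m = cs ! ((p0 + m) mod ?L)" for m
    proof (induction m)
      case 0 then show ?case using p0 by simp
    next
      case (Suc m)
      have h1: "hookC S q db Fs (c m) (c (Suc m))"
        using hookC_theta[OF th(1) mod_less_divisor[OF kpos, of m]] unfolding c_def
        by (simp add: mod_Suc_eq)
      have h2: "hookC S q db Fs (c m) (cs ! ((p0 + Suc m) mod ?L))"
        using emb_hook[OF e mod_less_divisor[OF L0, of "p0 + m"]] Suc by (simp add: mod_Suc_eq)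
      have ke: "key_equal S (c (Suc m)) (cs ! ((p0 + Suc m) mod ?L))" using hookC_unique[OF h1 h2] .
      have ydb: "cs ! ((p0 + Suc m) mod ?L) \<in> set cs" using L0 by simp
      have "cs ! ((p0 + Suc m) mod ?L) \<notin> P"
        using ginv_closed[OF g _ ke_sym[OF ke]] cnP[of "Suc m"] csdb[OF ccs[of "Suc m"]] by blast
      then have "cs ! ((p0 + Suc m) mod ?L) \<in> ?r" using ydb by blast
      then show ?case using P5 cr[of "Suc m"] ke unfolding consistent_def by blast
    qed
    have "c k = c 0" unfolding c_def by simp
    then have "cs ! ((p0 + k) mod ?L) = cs ! (p0 mod ?L)" using cm[of k] cm[of 0] by simp
    then have "(p0 + k) mod ?L = p0 mod ?L" using eL(3) L0 by (simp add: nth_eq_iff_index_eq)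
    then have "?L dvd k" using mod_eq_dvd_iff_nat[of p0 "p0 + k" ?L] by simp
    then have "?L \<le> k" using kpos by (simp add: dvd_imp_le)
    then have n1: "n = 1" using eL(1,2) kpos by (metis le_antisym mult_le_cancel2 nat_mult_1 one_le_mult_iff)
    then have Lk: "?L = k" using eL(1) by simp
    have "set cs \<subseteq> inst \<theta> ` q"
    proof
      fix x assume "x \<in> set cs"
      then obtain i where i: "i < ?L" "cs ! i = x" by (auto simp: in_set_conv_nth)
      have "(p0 + (i + ?L - p0)) mod ?L = i" using i(1) p0(1) by simp
      then have "x = c (i + ?L - p0)" using cm[of "i + ?L - p0"] i by simp
      then show "x \<in> inst \<theta> ` q" unfolding c_def using nth_q by blast
    qed
    then have "relevant q db cs" unfolding relevant_def using th(1) by blast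
    then show False using nr n1 by blast
  qed
  have "ginv ?P ?r" unfolding ginv_def using P1 P2 P3 P4 P5 P6 P7 by blast
  moreover have "P \<subset> ?P"
  proof -
    obtain x where x: "x \<in> set cs" "x \<notin> P" using out by blast
    have "x \<in> block S db x" using csdb[OF x(1)] by (simp add: block_iff)
    then show ?thesis using x by blast
  qed
  ultimately show ?thesis by blast
qed


lemma finite_db: "finite db" using isdb by (simp add: is_db_def)

lemma ginv_empty: "ginv {} {}"
  unfolding ginv_def consistent_def using Fs_ne by simp

lemma ginv_finite: "ginv P r \<Longrightarrow> finite P"
proof -
  assume "ginv P r"
  then have "P \<subseteq> db" using c_sub unfolding ginv_def by blast
  then show ?thesis using finite_db finite_subset by blast
qed

lemma garbage:
  assumes minimal: "\<forall>ob'. lemma19_conds S q db Fs ob' \<and> ob' \<subseteq> ob \<longrightarrow> ob' = ob"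
  shows "garbage_set S q db (set Fs) ob"
proof -
  have "\<exists>x. ginv (fst x) (snd x) \<and> (\<forall>y. ginv (fst y) (snd y) \<longrightarrow> card (fst y) \<le> card (fst x))"
  proof (rule ex_has_greatest_nat[of "\<lambda>x. ginv (fst x) (snd x)" "({}, {})" "\<lambda>x. card (fst x)" "Suc (card db)"])
    show "ginv (fst ({}, {})) (snd ({}, {}))" using ginv_empty by simp
    show "\<forall>y. ginv (fst y) (snd y) \<longrightarrow> card (fst y) < Suc (card db)"
    proof (intro allI impI)
      fix y assume "ginv (fst y) (snd y)"
      then have "fst y \<subseteq> db" using c_sub unfolding ginv_def by blast
      then have "card (fst y) \<le> card db" using card_mono[OF finite_db] by blast
      then show "card (fst y) < Suc (card db)" by simp
    qed
  qed
  then obtain x where x: "ginv (fst x) (snd x)" "\<forall>y. ginv (fst y) (snd y) \<longrightarrow> card (fst y) \<le> card (fst x)"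
    by blast
  define P where "P = fst x"
  define r where "r = snd x"
  have g: "ginv P r" using x(1) P_def r_def by simp
  have mx: "\<And>P' r'. ginv P' r' \<Longrightarrow> card P' \<le> card P"
  proof -
    fix P' r' assume "ginv P' r'"
    then show "card P' \<le> card P" using x(2)[rule_format, of "(P', r')"] P_def by simp
  qed
  have nogrow: "\<not> (\<exists>P' r'. ginv P' r' \<and> P \<subset> P')"
  proof
    assume "\<exists>P' r'. ginv P' r' \<and> P \<subset> P'"
    then obtain P' r' where "ginv P' r'" "P \<subset> P'" by blast
    then have "card P < card P'" using ginv_finite psubset_card_mono by blast
    then show False using mx \<open>ginv P' r'\<close> by fastforce
  qed
  have Pob: "P \<subseteq> ob" using g unfolding ginv_def by blast
  have lc: "lemma19_conds S q db Fs P"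
    unfolding lemma19_conds_def
  proof (intro conjI allI impI ballI)
    show "P \<subseteq> db" using Pob c_sub by blast
  next
    fix A assume "outdeg_zero S q db Fs A"
    then show "A \<in> P" using ext1[OF g] nogrow by blast
  next
    fix cs assume a: "embedding S q db Fs 1 cs \<and> \<not> relevant q db cs"
    then show "set cs \<subseteq> P" using ext23[OF g, of 1 cs] c2 nogrow by blast
  next
    fix n cs assume a: "2 \<le> n \<and> embedding S q db Fs n cs"
    then show "set cs \<subseteq> P" using ext23[OF g, of n cs] c3 nogrow by fastforce
  next
    fix cs assume a: "embedding S q db Fs 1 cs \<and> relevant q db cs \<and> set cs \<inter> P \<noteq> {}"
    then show "set cs \<subseteq> P" using ext4[OF g, of cs] nogrow by blast
  next
    fix A assume "A \<in> P" then show "block S db A \<subseteq> P" using g unfolding ginv_def by blast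
  qed
  have "P = ob" using minimal lc Pob by blast
  then have g: "ginv ob r" using g by simp
  have rep: "is_repair S ob r"
    unfolding is_repair_def
  proof (intro conjI allI impI)
    show "r \<subseteq> ob" "consistent S r" using g unfolding ginv_def by auto
  next
    fix r' assume a: "r \<subset> r' \<and> r' \<subseteq> ob"
    then obtain B where B: "B \<in> r'" "B \<notin> r" by blast
    then obtain C where C: "C \<in> r" "key_equal S B C" using a g unfolding ginv_def by blast
    have "C \<in> r'" "B \<noteq> C" using a B C by auto
    then show "\<not> consistent S r'" using B C unfolding consistent_def by blast
  qed
  have cond: "\<forall>\<theta> :: 'v \<Rightarrow> 'c. inst \<theta> ` q \<subseteq> (db - ob) \<union> r \<longrightarrow> inst \<theta> ` set Fs \<inter> r = {}"
  proof (intro allI impI)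
    fix \<theta> :: "'v \<Rightarrow> 'c" assume th: "inst \<theta> ` q \<subseteq> (db - ob) \<union> r"
    show "inst \<theta> ` set Fs \<inter> r = {}"
    proof (rule ccontr)
      assume ne: "inst \<theta> ` set Fs \<inter> r \<noteq> {}"
      have rob: "r \<subseteq> ob" using g unfolding ginv_def by blast
      have thdb: "inst \<theta> ` q \<subseteq> db" using th rob c_sub by blast
      have "set (Eth \<theta>) \<inter> ob \<noteq> {}" using ne rob set_Eth by blast
      then have "set (Eth \<theta>) \<subseteq> ob" using c4 theta_emb[OF thdb] by blast
      then have "inst \<theta> ` set Fs \<subseteq> r" using th Fs_q set_Eth by blast
      then show False using g thdb unfolding ginv_def by blast
    qed
  qed
  show ?thesis unfolding garbage_set_def
    using c_sub g rep cond unfolding ginv_def by blast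
qed


end

locale L19m = L19 S q db Fs ob
  for S :: "'r schema" and q :: "('r, 'v, 'c) atom set" and db :: "('r, 'c) fact set"
    and Fs :: "('r, 'v, 'c) atom list" and ob :: "('r, 'c) fact set" +
  fixes o2 :: "('r, 'c) fact set" and r2 :: "('r, 'c) fact set"
  assumes o2sub: "o2 \<subseteq> db"
    and o2at: "\<forall>A\<in>o2. atom_of q A \<in> set Fs \<and> block S db A \<subseteq> o2"
    and rep2: "is_repair S o2 r2"
    and cond2: "\<forall>\<theta> :: 'v \<Rightarrow> 'c. inst \<theta> ` q \<subseteq> (db - o2) \<union> r2 \<longrightarrow> inst \<theta> ` set Fs \<inter> r2 = {}"
begin

definition "NN = o2 - ob"
definition "DD = db - ob"

definition W :: "('r, 'c) fact \<Rightarrow> nat \<Rightarrow> bool" where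
  "W X m \<longleftrightarrow> (\<exists>(\<theta> :: 'v \<Rightarrow> 'c) i. i < k \<and> inst \<theta> ` q \<subseteq> db \<and> X = inst \<theta> (Fs ! i) \<and>
      inst \<theta> (Fs ! ((i + m) mod k)) \<in> NN)"
definition reach :: "('r, 'c) fact \<Rightarrow> nat \<Rightarrow> bool" where
  "reach Y m \<longleftrightarrow> (\<exists>Z\<in>db. key_equal S Y Z \<and> W Z m)"
definition dst :: "('r, 'c) fact \<Rightarrow> nat" where
  "dst Y = (LEAST m. reach Y m)"
definition gg :: "('r, 'c) fact \<Rightarrow> ('r, 'c) fact" where
  "gg Y = (if Y \<in> NN then (SOME Z. Z \<in> r2 \<and> key_equal S Y Z)
           else (SOME Z. Z \<in> db \<and> key_equal S Y Z \<and> W Z (dst Y)))"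
definition "G0 = {Y \<in> DD. Y \<in> NN \<or> (\<exists>m. reach Y m)}"
definition "sel = gg ` G0"

lemma r2sub: "r2 \<subseteq> o2" using rep2 by (simp add: is_repair_def)
lemma r2cons: "consistent S r2" using rep2 by (simp add: is_repair_def)

lemma cover2: "x \<in> o2 \<Longrightarrow> \<exists>y\<in>r2. key_equal S x y"
proof (cases "x \<in> r2")
  case True then show ?thesis using ke_refl by blast
next
  case False
  assume x: "x \<in> o2"
  have "r2 \<subset> insert x r2" "insert x r2 \<subseteq> o2" using False x r2sub by auto
  then have "\<not> consistent S (insert x r2)" using rep2 unfolding is_repair_def by blast
  then obtain a b where ab: "a \<in> insert x r2" "b \<in> insert x r2" "key_equal S a b" "a \<noteq> b"
    unfolding consistent_def by blast
  then have "a = x \<or> b = x" using r2cons unfolding consistent_def by blast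
  then show ?thesis using ab ke_sym by blast
qed

lemma NN_closed: "x \<in> NN \<Longrightarrow> key_equal S x y \<Longrightarrow> y \<in> db \<Longrightarrow> y \<in> NN"
proof -
  assume a: "x \<in> NN" "key_equal S x y" "y \<in> db"
  have "x \<in> o2" using a(1) by (simp add: NN_def)
  then have "block S db x \<subseteq> o2" using o2at by blast
  then have "y \<in> o2" using a(2,3) by (auto simp: block_iff)
  moreover have "y \<notin> ob" using c5'[OF _ ke_sym[OF a(2)]] a o2sub by (auto simp: NN_def)
  ultimately show ?thesis by (simp add: NN_def)
qed

lemma DD_closed: "x \<in> DD \<Longrightarrow> key_equal S x y \<Longrightarrow> y \<in> db \<Longrightarrow> y \<in> DD"
  using c5'[OF _ ke_sym] by (auto simp: DD_def)

lemma NN_DD: "NN \<subseteq> DD" using o2sub by (auto simp: NN_def DD_def)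

lemma ke_iff: "key_equal S Y Y' \<Longrightarrow> key_equal S Y Z \<longleftrightarrow> key_equal S Y' Z"
  unfolding key_equal_def by auto

lemma reach_ke: "key_equal S Y Y' \<Longrightarrow> reach Y = reach Y'"
proof -
  assume a: "key_equal S Y Y'"
  show ?thesis unfolding reach_def using ke_iff[OF a] by (intro ext) simp
qed

lemma dst_ke: "key_equal S Y Y' \<Longrightarrow> dst Y = dst Y'"
  unfolding dst_def using reach_ke by simp

lemma gg_ke: "key_equal S Y Y' \<Longrightarrow> Y \<in> db \<Longrightarrow> Y' \<in> db \<Longrightarrow> gg Y = gg Y'"
proof -
  assume a: "key_equal S Y Y'" "Y \<in> db" "Y' \<in> db"
  have nn: "Y \<in> NN \<longleftrightarrow> Y' \<in> NN" using NN_closed a ke_sym by blast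
  have p1: "(\<lambda>Z. Z \<in> r2 \<and> key_equal S Y Z) = (\<lambda>Z. Z \<in> r2 \<and> key_equal S Y' Z)"
    using ke_iff[OF a(1)] by (intro ext) simp
  have p2: "(\<lambda>Z. Z \<in> db \<and> key_equal S Y Z \<and> W Z (dst Y)) = (\<lambda>Z. Z \<in> db \<and> key_equal S Y' Z \<and> W Z (dst Y'))"
    using dst_ke[OF a(1)] ke_iff[OF a(1)] by (intro ext) simp
  show ?thesis unfolding gg_def using nn p1 p2 by simp
qed

lemma gg_prop:
  assumes Y: "Y \<in> G0"
  shows "gg Y \<in> db \<and> key_equal S Y (gg Y) \<and> (Y \<in> NN \<longrightarrow> gg Y \<in> r2) \<and> (Y \<notin> NN \<longrightarrow> W (gg Y) (dst Y))"
proof (cases "Y \<in> NN")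
  case True
  then have "Y \<in> o2" by (simp add: NN_def)
  then have ex: "\<exists>Z. Z \<in> r2 \<and> key_equal S Y Z" using cover2 by blast
  have "gg Y = (SOME Z. Z \<in> r2 \<and> key_equal S Y Z)" using True by (simp add: gg_def)
  then have "gg Y \<in> r2 \<and> key_equal S Y (gg Y)" using someI_ex[OF ex] by simp
  moreover then have "gg Y \<in> db" using r2sub o2sub by blast
  ultimately show ?thesis using True by blast
next
  case False
  then obtain m where "reach Y m" using Y by (auto simp: G0_def)
  then have "reach Y (dst Y)" unfolding dst_def by (rule LeastI)
  then have ex: "\<exists>Z. Z \<in> db \<and> key_equal S Y Z \<and> W Z (dst Y)" unfolding reach_def by blast
  have "gg Y = (SOME Z. Z \<in> db \<and> key_equal S Y Z \<and> W Z (dst Y))" using False by (simp add: gg_def)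
  then have "gg Y \<in> db \<and> key_equal S Y (gg Y) \<and> W (gg Y) (dst Y)"
    using someI_ex[OF ex] by simp
  then show ?thesis using False by blast
qed

lemma G0_DD: "G0 \<subseteq> DD" by (auto simp: G0_def)
lemma G0_db: "Y \<in> G0 \<Longrightarrow> Y \<in> db" using G0_DD by (auto simp: DD_def)

lemma gg_NN: "Y \<in> G0 \<Longrightarrow> gg Y \<in> NN \<longleftrightarrow> Y \<in> NN"
  using gg_prop NN_closed ke_sym G0_db by metis

lemma gg_G0: "Y \<in> G0 \<Longrightarrow> gg Y \<in> G0"
proof -
  assume Y: "Y \<in> G0"
  have p: "gg Y \<in> db" "key_equal S Y (gg Y)" using gg_prop[OF Y] by auto
  have "gg Y \<in> DD" using DD_closed[OF _ p(2) p(1)] Y G0_DD by blast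
  moreover have "gg Y \<in> NN \<or> (\<exists>m. reach (gg Y) m)"
  proof (cases "Y \<in> NN")
    case True then show ?thesis using gg_NN Y by blast
  next
    case False
    then have "W (gg Y) (dst Y)" using gg_prop[OF Y] by blast
    then show ?thesis unfolding reach_def using p(1) ke_refl by blast
  qed
  ultimately show ?thesis by (simp add: G0_def)
qed

lemma sel_fix: "X \<in> sel \<Longrightarrow> gg X = X"
proof -
  assume "X \<in> sel"
  then obtain Y where Y: "Y \<in> G0" "X = gg Y" by (auto simp: sel_def)
  then have "gg X = gg Y" using gg_ke[of Y X] gg_prop[OF Y(1)] G0_db by metis
  then show ?thesis using Y by simp
qed

lemma sel_G0: "sel \<subseteq> G0" using gg_G0 by (auto simp: sel_def)

lemma sel_cons: "consistent S sel"
  unfolding consistent_def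
proof (intro ballI impI)
  fix X X' assume a: "X \<in> sel" "X' \<in> sel" "key_equal S X X'"
  have "X \<in> db" "X' \<in> db" using a sel_G0 G0_db by auto
  then show "X = X'" using gg_ke[OF a(3)] sel_fix a by metis
qed

lemma sel_NN: "X \<in> sel \<Longrightarrow> X \<in> NN \<Longrightarrow> X \<in> r2"
  using sel_fix sel_G0 gg_prop by (metis subsetD)


lemma hasSucc: "X \<in> DD \<Longrightarrow> atom_of q X \<in> set Fs \<Longrightarrow> \<exists>Y. hookC S q db Fs X Y"
  using c1 by (auto simp: DD_def outdeg_zero_def)

lemma to_sel: "Z \<in> G0 \<Longrightarrow> hookC S q db Fs X Z \<Longrightarrow>
   hookC S q db Fs X (gg Z) \<and> gg Z \<in> sel \<and> (gg Z \<in> NN \<longleftrightarrow> Z \<in> NN) \<and> dst (gg Z) = dst Z"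
proof -
  assume Z: "Z \<in> G0" and h: "hookC S q db Fs X Z"
  have p: "gg Z \<in> db" "key_equal S Z (gg Z)" using gg_prop[OF Z] by auto
  show ?thesis using hookC_ke[OF h p(2) p(1)] Z gg_NN[OF Z] dst_ke[OF p(2)] by (auto simp: sel_def)
qed

lemma mod_aux1: "0 < d \<Longrightarrow> (Suc i mod k + (d - 1)) mod k = (i + d) mod k"
proof -
  assume d: "0 < d"
  have "(Suc i mod k + (d - 1)) mod k = (Suc i + (d - 1)) mod k" by (simp add: mod_add_left_eq)
  also have "Suc i + (d - 1) = i + d" using d by simp
  finally show ?thesis .
qed

lemma mod_aux2: "i < k \<Longrightarrow> (Suc i mod k + (k - 1)) mod k = i"
proof -
  assume i: "i < k"
  have "(Suc i mod k + (k - 1)) mod k = (Suc i + (k - 1)) mod k" by (simp add: mod_add_left_eq)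
  also have "Suc i + (k - 1) = i + k" using kpos by simp
  finally show ?thesis using i by simp
qed

lemma step:
  assumes X: "X \<in> sel"
  shows "\<exists>Y\<in>sel. hookC S q db Fs X Y \<and> (X \<notin> NN \<longrightarrow> Y \<in> NN \<or> dst Y < dst X)"
proof (cases "X \<in> NN")
  case False
  have XG: "X \<in> G0" using X sel_G0 by blast
  have "W X (dst X)" using gg_prop[OF XG] False sel_fix[OF X] by metis
  then obtain \<theta> i where th: "i < k" "inst \<theta> ` q \<subseteq> db" "X = inst \<theta> (Fs ! i)"
     "inst \<theta> (Fs ! ((i + dst X) mod k)) \<in> NN" unfolding W_def by blast
  define Z where "Z = inst \<theta> (Fs ! (Suc i mod k))"
  have h: "hookC S q db Fs X Z" using hookC_theta[OF th(2) th(1)] th(3) Z_def by simp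
  have XD: "X \<in> DD" using XG G0_DD by blast
  have ZD: "Z \<in> DD" using succ_out[OF _ h] XD hookC_db[OF h] by (auto simp: DD_def)
  have d0: "dst X \<noteq> 0"
  proof
    assume "dst X = 0"
    then show False using th(1,3,4) False by simp
  qed
  show ?thesis
  proof (cases "Z \<in> NN")
    case True
    then have "Z \<in> G0" using ZD by (simp add: G0_def)
    then show ?thesis using to_sel h True by blast
  next
    case ZN: False
    have "W Z (dst X - 1)" unfolding W_def
      using th(2,4) mod_aux1[of "dst X" i] d0 mod_less_divisor[OF kpos] Z_def by fastforce
    moreover have "Z \<in> db" using ZD by (simp add: DD_def)
    ultimately have r: "reach Z (dst X - 1)" unfolding reach_def using ke_refl by blast
    then have ZG: "Z \<in> G0" using ZD by (auto simp: G0_def)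
    have "dst Z \<le> dst X - 1" unfolding dst_def[of Z] using r by (rule Least_le)
    then have "dst Z < dst X" using d0 by simp
    then show ?thesis using to_sel[OF ZG h] by metis
  qed
next
  case True
  have XD: "X \<in> DD" using True NN_DD by blast
  have "atom_of q X \<in> set Fs" using True o2at by (auto simp: NN_def)
  then obtain y where "hookC S q db Fs X y" using hasSucc XD by blast
  then obtain \<theta> i where th: "i < k" "inst \<theta> ` q \<subseteq> db" "X = inst \<theta> (Fs ! i)"
    using hookC_unpack by blast
  define Z where "Z = inst \<theta> (Fs ! (Suc i mod k))"
  have h: "hookC S q db Fs X Z" using hookC_theta[OF th(2) th(1)] th(3) Z_def by simp
  have ZD: "Z \<in> DD" using succ_out[OF _ h] XD hookC_db[OF h] by (auto simp: DD_def)
  have "Z \<in> NN \<or> W Z (k - 1)" unfolding W_def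
    using th True mod_aux2[OF th(1)] mod_less_divisor[OF kpos] Z_def by fastforce
  moreover have "Z \<in> db" using ZD by (simp add: DD_def)
  ultimately have "Z \<in> NN \<or> reach Z (k - 1)" unfolding reach_def using ke_refl by blast
  then have ZG: "Z \<in> G0" using ZD by (auto simp: G0_def)
  show ?thesis using to_sel[OF ZG h] True by blast
qed


definition ff :: "('r, 'c) fact \<Rightarrow> ('r, 'c) fact" where
  "ff X = (SOME Y. Y \<in> sel \<and> hookC S q db Fs X Y \<and> (X \<notin> NN \<longrightarrow> Y \<in> NN \<or> dst Y < dst X))"

lemma ff_prop: "X \<in> sel \<Longrightarrow>
   ff X \<in> sel \<and> hookC S q db Fs X (ff X) \<and> (X \<notin> NN \<longrightarrow> ff X \<in> NN \<or> dst (ff X) < dst X)"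
proof -
  assume "X \<in> sel"
  then have "\<exists>Y. Y \<in> sel \<and> hookC S q db Fs X Y \<and> (X \<notin> NN \<longrightarrow> Y \<in> NN \<or> dst Y < dst X)"
    using step by blast
  then show ?thesis unfolding ff_def by (rule someI_ex)
qed

lemma mod_aux3: "i < k \<Longrightarrow> (a + (i + k - a mod k) mod k) mod k = i"
proof -
  assume i: "i < k"
  have am: "a mod k < k" using kpos by simp
  have "(a + (i + k - a mod k) mod k) mod k = (a mod k + (i + k - a mod k)) mod k"
    by (simp only: mod_add_right_eq mod_add_left_eq)
  also have "a mod k + (i + k - a mod k) = i + k" using am by simp
  finally show ?thesis using i by simp
qed

lemma two_le: "1 \<le> (n::nat) \<Longrightarrow> n \<noteq> 1 \<Longrightarrow> 2 \<le> n" by simp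

lemma sel_finite: "finite sel"
proof -
  have "sel \<subseteq> db" using sel_G0 G0_db by blast
  then show ?thesis using finite_db by (rule finite_subset)
qed

lemma main: "o2 \<subseteq> ob"
proof (rule ccontr)
  assume "\<not> o2 \<subseteq> ob"
  then obtain A0 where A0: "A0 \<in> NN" by (auto simp: NN_def)
  have A0G: "A0 \<in> G0" using A0 NN_DD by (auto simp: G0_def)
  define X0 where "X0 = gg A0"
  have X0: "X0 \<in> sel" "X0 \<in> NN" using A0G gg_NN[OF A0G] A0 X0_def by (auto simp: sel_def)
  define orb where "orb m = (ff ^^ m) X0" for m
  have orb_suc: "orb (Suc m) = ff (orb m)" for m by (simp add: orb_def)
  have orb_sel: "orb m \<in> sel" for m
    by (induction m) (auto simp: orb_def X0 ff_prop)
  have orb_ff: "orb (Suc m) \<in> sel \<and> hookC S q db Fs (orb m) (orb (Suc m)) \<and>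
     (orb m \<notin> NN \<longrightarrow> orb (Suc m) \<in> NN \<or> dst (orb (Suc m)) < dst (orb m))" for m
    using ff_prop[OF orb_sel[of m]] orb_suc by simp
  have "\<not> inj_on orb {0..card sel}"
  proof
    assume inj: "inj_on orb {0..card sel}"
    have "orb ` {0..card sel} \<subseteq> sel" using orb_sel by blast
    then have "card (orb ` {0..card sel}) \<le> card sel" using sel_finite card_mono by blast
    then show False using card_image[OF inj] by simp
  qed
  then obtain a b where ab: "a \<noteq> b" "orb a = orb b" unfolding inj_on_def by blast
  have ex: "\<exists>t. \<exists>s<t. orb s = orb t"
  proof (cases "a < b")
    case True then show ?thesis using ab by blast
  next
    case False then have "b < a" using ab(1) by simp
    then show ?thesis using ab by metis
  qed
  define t0 where "t0 = (LEAST t. \<exists>s<t. orb s = orb t)"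
  obtain s0 where s0: "s0 < t0" "orb s0 = orb t0"
    using LeastI_ex[OF ex] unfolding t0_def by blast
  have distinct_below: "\<And>a b. a < t0 \<Longrightarrow> b < t0 \<Longrightarrow> orb a = orb b \<Longrightarrow> a = b"
  proof (rule ccontr)
    fix a b assume ab: "a < t0" "b < t0" "orb a = orb b" "a \<noteq> b"
    have "\<exists>s<max a b. orb s = orb (max a b)"
    proof (cases "a < b")
      case True then have "max a b = b" by simp
      then show ?thesis using ab True by metis
    next
      case False then have "b < a" "max a b = a" using ab(4) by auto
      then show ?thesis using ab by metis
    qed
    then have "t0 \<le> max a b" unfolding t0_def by (rule Least_le)
    then show False using ab by simp
  qed
  have "atom_of q X0 \<in> set Fs" using X0(2) o2at by (auto simp: NN_def)
  then obtain i0 where i0: "i0 < k" "atom_of q X0 = Fs ! i0" by (metis in_set_conv_nth)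
  have at: "atom_of q (orb m) = Fs ! ((i0 + m) mod k)" for m
  proof (induction m)
    case 0 then show ?case using i0 by (simp add: orb_def)
  next
    case (Suc m)
    have "atom_of q (orb (Suc m)) = Fs ! (Suc ((i0 + m) mod k) mod k)"
      using hookC_index[OF conjunct1[OF conjunct2[OF orb_ff[of m]]] Suc mod_less_divisor[OF kpos]] .
    then show ?case by (simp add: mod_Suc_eq)
  qed
  have "Fs ! ((i0 + s0) mod k) = Fs ! ((i0 + t0) mod k)" using at[of s0] at[of t0] s0(2) by simp
  then have "(i0 + t0) mod k = (i0 + s0) mod k" using nth_inj mod_less_divisor[OF kpos] by metis
  then have "k dvd (i0 + t0) - (i0 + s0)" using mod_eq_dvd_iff_nat[of "i0 + s0" "i0 + t0" k] s0(1) by simp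
  then have kdvd: "k dvd (t0 - s0)" by simp
  define L where "L = t0 - s0"
  define n where "n = L div k"
  have L0: "0 < L" using s0 L_def by simp
  have Ln: "L = n * k" using kdvd L_def n_def by simp
  have n1: "1 \<le> n" using L0 Ln by (cases n) auto
  define cs where "cs = map orb [s0..<t0]"
  have lcs: "length cs = L" by (simp add: cs_def L_def)
  have ncs: "\<And>j. j < L \<Longrightarrow> cs ! j = orb (s0 + j)" by (simp add: cs_def L_def)
  have nxt: "\<And>j. j < L \<Longrightarrow> cs ! (Suc j mod L) = orb (Suc (s0 + j))"
  proof -
    fix j assume j: "j < L"
    show "cs ! (Suc j mod L) = orb (Suc (s0 + j))"
    proof (cases "Suc j < L")
      case True then show ?thesis using ncs by simp
    next
      case False
      then have sj: "Suc j = L" using j by simp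
      then have "Suc (s0 + j) = t0" using s0(1) L_def by simp
      moreover have "Suc j mod L = 0" using sj by simp
      ultimately show ?thesis using ncs[OF L0] s0 by simp
    qed
  qed
  have setcs: "set cs \<subseteq> sel" using orb_sel by (auto simp: cs_def)
  have emb: "embedding S q db Fs n cs"
    unfolding embedding_def
  proof (intro conjI allI impI)
    show "1 \<le> n" using n1 .
    show "length cs = n * k" using lcs Ln by simp
    show "distinct cs" unfolding cs_def distinct_map
      using distinct_below by (auto simp: inj_on_def)
    show "consistent S (set cs)" using sel_cons setcs unfolding consistent_def by blast
  next
    fix i assume "i < length cs"
    then have i: "i < L" using lcs by simp
    show "hookC S q db Fs (cs ! i) (cs ! ((i + 1) mod length cs))"
      using orb_ff[of "s0 + i"] ncs[OF i] nxt[OF i] lcs by simp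
  qed
  have "set cs \<subseteq> DD" using setcs sel_G0 G0_DD by blast
  then have csD: "set cs \<inter> ob = {}" by (auto simp: DD_def)
  have csne: "set cs \<noteq> {}" using lcs L0 by auto
  have nn1: "n = 1"
  proof (rule ccontr)
    assume nne: "n \<noteq> 1"
    have n2: "2 \<le> n" using two_le[OF n1 nne] .
    have "set cs \<subseteq> ob" using c3[OF n2 emb] .
    then have "set cs \<inter> ob = set cs" by (rule Int_absorb2)
    then have "set cs = {}" using csD by simp
    then show False using csne by simp
  qed
  have "relevant q db cs"
  proof (rule ccontr)
    assume "\<not> relevant q db cs"
    moreover have "embedding S q db Fs 1 cs" using emb nn1 by simp
    ultimately have "set cs \<subseteq> ob" using c2 by blast
    then have "set cs \<inter> ob = set cs" by (rule Int_absorb2)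
    then have "set cs = {}" using csD by simp
    then show False using csne by simp
  qed
  then obtain th :: "'v \<Rightarrow> 'c" where th: "inst th ` q \<subseteq> db" "set cs \<subseteq> inst th ` q"
    unfolding relevant_def by blast
  have LK: "L = k" using Ln nn1 by simp
  have "\<exists>j<L. orb (s0 + j) \<in> NN"
  proof (rule ccontr)
    assume "\<not> ?thesis"
    then have nN: "\<And>j. j < L \<Longrightarrow> orb (s0 + j) \<notin> NN" by blast
    have "m \<le> L \<Longrightarrow> dst (orb (s0 + m)) + m \<le> dst (orb s0)" for m
    proof (induction m)
      case 0 then show ?case by simp
    next
      case (Suc m)
      have m: "m < L" using Suc by simp
      have "orb (Suc (s0 + m)) \<notin> NN"
      proof (cases "Suc m < L")
        case True then show ?thesis using nN[of "Suc m"] by simp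
      next
        case False
        then have "Suc (s0 + m) = t0" using m L_def s0 by simp
        then show ?thesis using nN[OF L0] s0 by simp
      qed
      then have "dst (orb (Suc (s0 + m))) < dst (orb (s0 + m))" using orb_ff[of "s0 + m"] nN[OF m] by blast
      then show ?case using Suc m by simp
    qed
    from this[of L] have "dst (orb t0) + L \<le> dst (orb s0)" using L_def s0 by simp
    then show False using s0 L0 by simp
  qed
  then obtain j where j: "j < L" "orb (s0 + j) \<in> NN" by blast
  define X where "X = orb (s0 + j)"
  have Xcs: "X \<in> set cs" using ncs[OF j(1)] j(1) lcs X_def by (metis nth_mem)
  have Xr: "X \<in> r2" using sel_NN orb_sel j X_def by blast
  obtain F where F: "F \<in> q" "X = inst th F" using Xcs th by blast
  have "atom_of q X = F" using F atom_of_inst by simp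
  moreover have "atom_of q X \<in> set Fs" using j(2) o2at X_def by (auto simp: NN_def)
  ultimately have hit: "inst th ` set Fs \<inter> r2 \<noteq> {}" using F Xr by blast
  have cov: "\<And>i. i < k \<Longrightarrow> \<exists>c\<in>set cs. atom_of q c = Fs ! i"
  proof -
    fix i assume i: "i < k"
    define jj where "jj = (i + k - (i0 + s0) mod k) mod k"
    have jj: "jj < L" using LK kpos jj_def by simp
    have "atom_of q (orb (s0 + jj)) = Fs ! i"
      using at[of "s0 + jj"] mod_aux3[OF i, of "i0 + s0"] jj_def by (simp add: add.assoc)
    then show "\<exists>c\<in>set cs. atom_of q c = Fs ! i" using ncs[OF jj] jj lcs by (metis nth_mem)
  qed
  have "inst th ` q \<subseteq> (db - o2) \<union> r2"
  proof
    fix Y assume "Y \<in> inst th ` q"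
    then obtain G where G: "G \<in> q" "Y = inst th G" by blast
    show "Y \<in> (db - o2) \<union> r2"
    proof (cases "Y \<in> o2")
      case False then show ?thesis using th(1) G by blast
    next
      case True
      have "atom_of q Y = G" using G atom_of_inst by simp
      then have "G \<in> set Fs" using True o2at by blast
      then obtain i where i: "i < k" "G = Fs ! i" by (metis in_set_conv_nth)
      obtain c where c: "c \<in> set cs" "atom_of q c = Fs ! i" using cov[OF i(1)] by blast
      obtain G' where G': "G' \<in> q" "c = inst th G'" using c(1) th(2) by blast
      have "G' = G" using c(2) G' i(2) atom_of_inst by simp
      then have "c = Y" using G G' by simp
      then have "Y \<in> sel" "Y \<in> DD" using c(1) setcs sel_G0 G0_DD by auto
      then have "Y \<in> NN" using True by (simp add: NN_def DD_def)
      then show ?thesis using sel_NN \<open>Y \<in> sel\<close> by blast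
    qed
  qed
  then show False using cond2 hit by blast
qed

end

theorem lemma19:
  fixes S :: "'r schema"
    and q :: "('r, 'v, 'c) atom set"
    and db :: "('r, 'c) fact set"
    and Fs :: "('r, 'v, 'c) atom list"
    and ob :: "('r, 'c) fact set"
  assumes "sjf_query S q"
    and "mgraph_cycle S q Fs"
    and "is_db S q db"
    and "lemma19_conds S q db Fs ob"
    and "\<forall>ob'. lemma19_conds S q db Fs ob' \<and> ob' \<subseteq> ob \<longrightarrow> ob' = ob"
  shows "max_garbage_set S q db (set Fs) ob"
proof -
  interpret L: L19 S q db Fs ob using assms(1-4) by unfold_locales
  have g: "garbage_set S q db (set Fs) ob" using L.garbage assms(5) by blast
  have "\<forall>ob'. garbage_set S q db (set Fs) ob' \<longrightarrow> ob' \<subseteq> ob"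
  proof (intro allI impI)
    fix ob' assume a: "garbage_set S q db (set Fs) ob'"
    then obtain r' where r': "ob' \<subseteq> db" "\<forall>A\<in>ob'. atom_of q A \<in> set Fs \<and> block S db A \<subseteq> ob'"
      "is_repair S ob' r'"
      "\<forall>\<theta> :: 'v \<Rightarrow> 'c. inst \<theta> ` q \<subseteq> (db - ob') \<union> r' \<longrightarrow> inst \<theta> ` set Fs \<inter> r' = {}"
      unfolding garbage_set_def by blast
    interpret M: L19m S q db Fs ob ob' r'
      using assms(1-4) r' by unfold_locales
    show "ob' \<subseteq> ob" by (rule M.main)
  qed
  then show ?thesis using g unfolding max_garbage_set_def by blast
qed

end
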